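(* Let $m\geq 1$ and $n>1$ be integers and let $G$ be an $r$-regular graph of order $m$. If $n\equiv 0\pmod 2$, or $mn\equiv 1\pmod 2$, or $G$ is distance magic, then $G\circ nK_1$ is distance magic.
   Context: A graph $G$ on $v$ vertices is distance magic if there is a bijection $f:V(G)\to\{1,\ldots,v\}$ and a constant $k$ such that for every vertex $x$, $\sum_{y\in N(x)}f(y)=k$, where $N(x)$ is the set of neighbours of $x$. $nK_1$ is the edgeless graph on $n$ vertices. The lexicographic product $G\circ H$ has vertex set $V(G)\times V(H)$, with $(g,h)$ adjacent to $(g',h')$ iff either $gg'\in E(G)$, or $g=g'$ and $hh'\in E(H)$. *)

theory Defs
  imports Main
begin

definition simple_graph :: "'a set \<Rightarrow> ('a \<Rightarrow> 'a \<Rightarrow> bool) \<Rightarrow> bool" where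
  "simple_graph V E \<longleftrightarrow> finite V \<and> (\<forall>x y. E x y \<longrightarrow> x \<in> V \<and> y \<in> V)
     \<and> (\<forall>x y. E x y \<longrightarrow> E y x) \<and> (\<forall>x. \<not> E x x)"

definition nbhd :: "'a set \<Rightarrow> ('a \<Rightarrow> 'a \<Rightarrow> bool) \<Rightarrow> 'a \<Rightarrow> 'a set" where
  "nbhd V E x = {y \<in> V. E x y}"

definition regular :: "'a set \<Rightarrow> ('a \<Rightarrow> 'a \<Rightarrow> bool) \<Rightarrow> nat \<Rightarrow> bool" where
  "regular V E r \<longleftrightarrow> (\<forall>x\<in>V. card (nbhd V E x) = r)"

definition distance_magic :: "'a set \<Rightarrow> ('a \<Rightarrow> 'a \<Rightarrow> bool) \<Rightarrow> bool" where
  "distance_magic V E \<longleftrightarrow> (\<exists>f :: 'a \<Rightarrow> nat. \<exists>k. bij_betw f V {1..card V} \<and>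
      (\<forall>x\<in>V. (\<Sum>y\<in>nbhd V E x. f y) = k))"

definition lex_verts :: "'a set \<Rightarrow> 'b set \<Rightarrow> ('a \<times> 'b) set" where
  "lex_verts V W = V \<times> W"

definition lex_edges :: "('a \<Rightarrow> 'a \<Rightarrow> bool) \<Rightarrow> ('b \<Rightarrow> 'b \<Rightarrow> bool) \<Rightarrow> ('a \<times> 'b) \<Rightarrow> ('a \<times> 'b) \<Rightarrow> bool" where
  "lex_edges E F p q \<longleftrightarrow> E (fst p) (fst q) \<or> (fst p = fst q \<and> F (snd p) (snd q))"

definition empty_verts :: "nat \<Rightarrow> nat set" where "empty_verts n = {0..<n}"
definition empty_edges :: "nat \<Rightarrow> nat \<Rightarrow> bool" where "empty_edges x y = False"

end

theory Submission imports Defs begin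

lemma key:
  assumes sg: "simple_graph V E" and reg: "regular V E r" and cV: "card V = m"
    and bij: "\<And>i. i < n \<Longrightarrow> bij_betw (\<lambda>h. g h i) V {0..<m}"
    and cs: "\<And>x. x \<in> V \<Longrightarrow> (\<Sum>y\<in>nbhd V E x. \<Sum>i<n. g y i) = K"
  shows "distance_magic (lex_verts V (empty_verts n)) (lex_edges E empty_edges)"
proof -
  have finV: "finite V" using sg by (simp add: simple_graph_def)
  define f where "f = (\<lambda>p. snd p * m + g (fst p) (snd p) + 1)"
  let ?P = "V \<times> {0..<n}"
  have lt: "g h i < m" if "h \<in> V" "i < n" for h i
    using bij[OF that(2)] that(1) by (auto simp: bij_betw_def)
  have inj: "inj_on f ?P"
  proof (rule inj_onI)
    fix p q assume p: "p \<in> ?P" and q: "q \<in> ?P" and e: "f p = f q"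
    obtain h i where pe: "p = (h,i)" by fastforce
    obtain h' i' where qe: "q = (h',i')" by fastforce
    have hi: "h \<in> V" "i < n" "h' \<in> V" "i' < n" using p q pe qe by auto
    have a: "g h i < m" "g h' i' < m" using lt hi by auto
    have e2: "i * m + g h i = i' * m + g h' i'" using e pe qe by (simp add: f_def)
    have "(i * m + g h i) div m = i" using a by simp
    moreover have "(i' * m + g h' i') div m = i'" using a by simp
    ultimately have ii: "i = i'" using e2 by metis
    then have "g h i = g h' i" using e2 by simp
    then have "h = h'" using bij[OF hi(2)] hi by (auto simp: bij_betw_def inj_on_def)
    then show "p = q" using pe qe ii by simp
  qed
  have sub: "f ` ?P \<subseteq> {1..m*n}"
  proof
    fix z assume "z \<in> f ` ?P"
    then obtain h i where hi: "h \<in> V" "i < n" and z: "z = i * m + g h i + 1"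
      by (auto simp: f_def)
    have "g h i < m" using lt hi by auto
    moreover have "i * m + m \<le> n * m" using hi(2)
      by (metis add.commute mult_Suc mult_le_mono1 Suc_leI)
    ultimately show "z \<in> {1..m*n}" using z by (simp add: mult.commute)
  qed
  have "card (f ` ?P) = m * n" using inj cV finV by (simp add: card_image card_cartesian_product)
  then have im: "f ` ?P = {1..m*n}" using sub by (intro card_subset_eq) auto
  have bf: "bij_betw f ?P {1..card ?P}"
    using inj im cV finV by (simp add: bij_betw_def card_cartesian_product)
  define C where "C = (\<Sum>i<n. i * m + 1)"
  have nb: "nbhd ?P (lex_edges E empty_edges) p = nbhd V E (fst p) \<times> {0..<n}" if "p \<in> ?P" for p
    using sg by (auto simp: nbhd_def lex_edges_def empty_edges_def simple_graph_def)
  have "(\<Sum>q\<in>nbhd ?P (lex_edges E empty_edges) p. f q) = r * C + K" if p: "p \<in> ?P" for p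
  proof -
    have fp: "fst p \<in> V" using p by auto
    have "(\<Sum>q\<in>nbhd ?P (lex_edges E empty_edges) p. f q)
        = (\<Sum>y\<in>nbhd V E (fst p). \<Sum>i\<in>{0..<n}. f (y,i))"
      using nb[OF p] by (simp add: sum.cartesian_product)
    also have "\<dots> = (\<Sum>y\<in>nbhd V E (fst p). C + (\<Sum>i<n. g y i))"
    proof (rule sum.cong[OF refl])
      fix y
      have "(\<Sum>i\<in>{0..<n}. f (y,i)) = (\<Sum>i\<in>{0..<n}. (i * m + 1) + g y i)"
        by (rule sum.cong) (auto simp: f_def)
      also have "\<dots> = C + (\<Sum>i<n. g y i)"
        by (simp only: sum.distrib C_def lessThan_atLeast0)
      finally show "(\<Sum>i\<in>{0..<n}. f (y,i)) = C + (\<Sum>i<n. g y i)" .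
    qed
    also have "\<dots> = card (nbhd V E (fst p)) * C + K"
      using cs[OF fp] by (simp add: sum.distrib)
    also have "\<dots> = r * C + K" using reg fp by (simp add: regular_def)
    finally show ?thesis .
  qed
  then show ?thesis using bf unfolding distance_magic_def lex_verts_def empty_verts_def
    by blast
qed

lemma endo_bij:
  assumes "\<And>x. x < m \<Longrightarrow> s x < (m::nat)" and "\<And>x y. x < m \<Longrightarrow> y < m \<Longrightarrow> s x = s y \<Longrightarrow> x = y"
  shows "bij_betw s {0..<m} {0..<m}"
proof -
  have i: "inj_on s {0..<m}" using assms(2) by (auto simp: inj_on_def)
  have "s ` {0..<m} \<subseteq> {0..<m}" using assms(1) by auto
  then have "s ` {0..<m} = {0..<m}" using i by (intro endo_inj_surj) auto
  then show ?thesis using i by (simp add: bij_betw_def)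
qed

lemma sigma_bij: "bij_betw (\<lambda>j. if j \<le> h then j + h else j - h - 1) {0..<2*h+1::nat} {0..<2*h+1}"
  by (rule endo_bij) (auto split: if_splits)

lemma tau_bij: "bij_betw (\<lambda>j. if j \<le> h then 2*h - 2*j else 4*h+1-2*j) {0..<2*h+1::nat} {0..<2*h+1}"
proof (rule endo_bij)
  fix x y :: nat
  assume xy: "x < 2*h+1" "y < 2*h+1" and e: "(if x \<le> h then 2*h - 2*x else 4*h+1-2*x) = (if y \<le> h then 2*h - 2*y else 4*h+1-2*y)"
  show "x = y"
  proof (cases "x \<le> h"; cases "y \<le> h")
    assume "x \<le> h" "\<not> y \<le> h"
    then have "2*h - 2*x = 4*h+1-2*y" using e by simp
    then have "2*(h - x) = 2*(2*h-y) + 1" using xy by simp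
    then show ?thesis by presburger
  next
    assume "\<not> x \<le> h" "y \<le> h"
    then have "2*h - 2*y = 4*h+1-2*x" using e by simp
    then have "2*(h - y) = 2*(2*h-x) + 1" using xy by simp
    then show ?thesis by presburger
  qed (use e xy in \<open>auto split: if_splits\<close>)
qed auto

lemma compl_bij: "bij_betw (\<lambda>j. m - 1 - j) {0..<m} {0..<(m::nat)}"
  by (rule endo_bij) auto

lemma pair_sum: "(\<Sum>i<2*t. if even i then a else b) = t*(a+b::nat)"
  by (induction t) (auto simp: algebra_simps)

lemma odd_sum:
  assumes "\<And>i. i \<ge> 3 \<Longrightarrow> G i = (if odd i then a else (b::nat))"
  shows "(\<Sum>i<3+2*t. G i) = G 0 + G 1 + G 2 + t*(a+b)"
proof (induction t)
  case 0 show ?case by (simp add: numeral_3_eq_3 numeral_2_eq_2)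
next
  case (Suc t)
  have "3+2*Suc t = Suc (Suc (3+2*t))" by simp
  then have "(\<Sum>i<3+2*Suc t. G i) = (\<Sum>i<3+2*t. G i) + G (3+2*t) + G (Suc (3+2*t))"
    by (simp only: sum.lessThan_Suc)
  also have "G (3+2*t) = a" using assms[of "3+2*t"] by simp
  also have "G (Suc (3+2*t)) = b" using assms[of "Suc (3+2*t)"] by simp
  finally show ?case using Suc by (simp add: algebra_simps)
qed

theorem theorem14:
  fixes V :: "'a set" and E :: "'a \<Rightarrow> 'a \<Rightarrow> bool" and m n r :: nat
  assumes "simple_graph V E" and "regular V E r" and "card V = m"
    and "m \<ge> 1" and "n > 1"
    and "even n \<or> odd (m * n) \<or> distance_magic V E"
  shows "distance_magic (lex_verts V (empty_verts n)) (lex_edges E empty_edges)"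
proof -
  have finV: "finite V" using assms(1) by (simp add: simple_graph_def)
  obtain phi where phi: "bij_betw phi V {0..<m}" using ex_bij_betw_finite_nat[OF finV] assms(3) by auto
  have phil: "phi y < m" if "y \<in> V" for y using phi that by (auto simp: bij_betw_def)
  have cr: "(\<Sum>y\<in>nbhd V E x. c) = r * c" if "x \<in> V" for x c
    using assms(2) that by (simp add: regular_def)
  consider "even n" | "odd m" "odd n" | "distance_magic V E" using assms(6) by auto
  then show ?thesis
  proof cases
    case 1
    then obtain t where t: "n = 2*t" by auto
    let ?g = "\<lambda>h (i::nat). if even i then phi h else m - 1 - phi h"
    show ?thesis
    proof (rule key[OF assms(1,2,3), of n ?g "r * (t*(m-1))"])
      fix i show "bij_betw (\<lambda>h. ?g h i) V {0..<m}"
        using phi bij_betw_trans[OF phi compl_bij] by (cases "even i") (auto simp: o_def)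
    next
      fix x assume x: "x \<in> V"
      have "(\<Sum>y\<in>nbhd V E x. \<Sum>i<n. ?g y i) = (\<Sum>y\<in>nbhd V E x. t*(m-1))"
      proof (rule sum.cong[OF refl])
        fix y assume "y \<in> nbhd V E x"
        then have "phi y < m" using phil by (auto simp: nbhd_def)
        then show "(\<Sum>i<n. ?g y i) = t*(m-1)" using t pair_sum[where t=t and a="phi y" and b="m - 1 - phi y"] by simp
      qed
      then show "(\<Sum>y\<in>nbhd V E x. \<Sum>i<n. ?g y i) = r * (t*(m-1))" using cr[OF x] by (rule trans)
    qed
  next
    case 2
    then obtain h where h: "m = 2*h+1" by (metis oddE)
    define t where "t = (n - 3) div 2"
    have t: "n = 3 + 2*t" using 2 assms(5) unfolding t_def by presburger
    define s where "s = (\<lambda>j::nat. if j \<le> h then j + h else j - h - 1)"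
    define u where "u = (\<lambda>j::nat. if j \<le> h then 2*h - 2*j else 4*h+1-2*j)"
    let ?g = "\<lambda>y (i::nat). if i = 0 then phi y else if i = 1 then s (phi y) else if i = 2 then u (phi y)
       else if odd i then phi y else m - 1 - phi y"
    show ?thesis
    proof (rule key[OF assms(1,2,3), of n ?g "r * (3*h + t*(m-1))"])
      fix i :: nat
      have b1: "bij_betw (s o phi) V {0..<m}" using bij_betw_trans[OF phi] sigma_bij[of h] h s_def by simp
      have b2: "bij_betw (u o phi) V {0..<m}" using bij_betw_trans[OF phi] tau_bij[of h] h u_def by simp
      have b3: "bij_betw ((\<lambda>j. m - 1 - j) o phi) V {0..<m}" using bij_betw_trans[OF phi compl_bij] by simp
      have "(\<lambda>h. ?g h i) = (if i = 0 then phi else if i = 1 then s o phi else if i = 2 then u o phi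
         else if odd i then phi else (\<lambda>j. m - 1 - j) o phi)" by (simp add: fun_eq_iff)
      then show "bij_betw (\<lambda>h. ?g h i) V {0..<m}"
        using phi b1 b2 b3 by (simp add: o_def)
    next
      fix x assume x: "x \<in> V"
      have "(\<Sum>y\<in>nbhd V E x. \<Sum>i<n. ?g y i) = (\<Sum>y\<in>nbhd V E x. 3*h + t*(m-1))"
      proof (rule sum.cong[OF refl])
        fix y assume "y \<in> nbhd V E x"
        then have py: "phi y < m" using phil by (auto simp: nbhd_def)
        have "(\<Sum>i<n. ?g y i) = ?g y 0 + ?g y 1 + ?g y 2 + t*(phi y + (m - 1 - phi y))"
          unfolding t by (rule odd_sum) auto
        also have "\<dots> = 3*h + t*(m-1)"
        proof (cases "phi y \<le> h")
          case True then show ?thesis using py h by (simp add: s_def u_def)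
        next
          case False then show ?thesis using py h by (simp add: s_def u_def)
        qed
        finally show "(\<Sum>i<n. ?g y i) = 3*h + t*(m-1)" .
      qed
      then show "(\<Sum>y\<in>nbhd V E x. \<Sum>i<n. ?g y i) = r * (3*h + t*(m-1))" using cr[OF x] by (rule trans)
    qed
  next
    case 3
    then obtain dm k where dm: "bij_betw dm V {1..m}" and k: "\<And>x. x \<in> V \<Longrightarrow> (\<Sum>y\<in>nbhd V E x. dm y) = k"
      unfolding distance_magic_def using assms(3) by blast
    have dm1: "dm y \<ge> 1" if "y \<in> V" for y using dm that by (auto simp: bij_betw_def)
    have bm: "bij_betw (\<lambda>x. x - 1) {1..m} {0..<m}"
    proof -
      have "inj_on (\<lambda>x::nat. x - 1) {1..m}" by (auto simp: inj_on_def)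
      moreover have "(\<lambda>x::nat. x - 1) ` {1..m} = {0..<m}"
      proof
        show "(\<lambda>x::nat. x - 1) ` {1..m} \<subseteq> {0..<m}" by auto
        show "{0..<m} \<subseteq> (\<lambda>x::nat. x - 1) ` {1..m}"
        proof
          fix z assume "z \<in> {0..<m}"
          then have "Suc z \<in> {1..m}" "z = Suc z - 1" by auto
          then show "z \<in> (\<lambda>x::nat. x - 1) ` {1..m}" by blast
        qed
      qed
      ultimately show ?thesis by (simp add: bij_betw_def)
    qed
    let ?g = "\<lambda>y (i::nat). dm y - 1"
    show ?thesis
    proof (rule key[OF assms(1,2,3), of n ?g "n*k - n*r"])
      fix i show "bij_betw (\<lambda>h. ?g h i) V {0..<m}" using bij_betw_trans[OF dm bm] by (simp add: o_def)
    next
      fix x assume x: "x \<in> V"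
      have "(\<Sum>y\<in>nbhd V E x. \<Sum>i<n. ?g y i) + (\<Sum>y\<in>nbhd V E x. n)
          = (\<Sum>y\<in>nbhd V E x. n * dm y)"
        unfolding sum.distrib[symmetric]
      proof (rule sum.cong[OF refl])
        fix y assume "y \<in> nbhd V E x"
        then have "dm y \<ge> 1" using dm1 by (auto simp: nbhd_def)
        then show "(\<Sum>i<n. dm y - 1) + n = n * dm y"
          by (cases "dm y") (auto simp: algebra_simps)
      qed
      also have "\<dots> = n * k" using k[OF x] by (simp add: sum_distrib_left[symmetric])
      finally have "(\<Sum>y\<in>nbhd V E x. \<Sum>i<n. ?g y i) + r * n = n * k"
        using assms(2) x by (simp add: regular_def)
      then show "(\<Sum>y\<in>nbhd V E x. \<Sum>i<n. ?g y i) = n*k - n*r"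
        by (metis add_diff_cancel_right' mult.commute)
    qed
  qed
qed

end
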